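(* Let $h_0>0$ and $\beta_1>0$ be such that for all $h\le h_0$, $\sup_{\mathbf{v}\in\mathring{\mathbf{V}}_h\setminus\{0\}}\int_{\Omega_h}(\operatorname{div}\mathbf{v})q\,dx/\|\nabla\mathbf{v}\|_{L^2(\Omega_h)}\ge\beta_1\|q\|_{L^2(\Omega_h)}$ for all $q\in\mathring{Q}_h$, and let $\beta_2>0$ be such that $\sup_{\mathbf{v}\in\mathbf{V}_h\setminus\{0\}}\int_{\partial\Omega_h}(\mathbf{v}\cdot\mathbf{n}_h)\mu\,ds/\|\mathbf{v}\|_{1,h}\ge\beta_2\|\mu\|_{-1/2,h}$ for all $\mu\in\mathring{X}_h$. Then there exists $\beta>0$ depending only on $\beta_1$ and $\beta_2$ such that for all $h\le h_0$, \[ \beta\|(q,\mu)\|\le\sup_{\mathbf{v}\in\mathbf{V}_h\setminus\{0\}}\frac{b_h(\mathbf{v},(q,\mu))}{\|\mathbf{v}\|_{1,h}}\qquad\forall(q,\mu)\in\mathring{Q}_h\times\mathring{X}_h . \]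
   Context: $\Omega\subset\mathbb{R}^2$ bounded with smooth boundary; $S\supset\Omega$ a polygon with quasi-uniform shape-regular triangulation $\mathcal{S}_h$ of mesh size $h$; $\mathcal{T}_h=\{T\in\mathcal{S}_h:\bar T\subset\bar\Omega\}$, $\Omega_h=\operatorname{int}(\bigcup_{T\in\mathcal{T}_h}\bar T)$; $\mathcal{T}_h^{ct}$ its Clough–Tocher refinement; $\mathcal{E}_h^B$ boundary edges, $\mathbf{n}_h$ outward normal of $\partial\Omega_h$, $h_e=\operatorname{diam}e$, $\int_{\partial\Omega_h}q=\sum_{e\in\mathcal{E}_h^B}\int_e q$. Spaces: $\mathbf{V}_h=\{\mathbf{v}\in\mathbf{H}^1(\Omega_h):\mathbf{v}|_K\in\mathcal{P}_2(K)^2\ \forall K\in\mathcal{T}_h^{ct},\ \int_{\partial\Omega_h}\mathbf{v}\cdot\mathbf{n}_h=0\}$, $\mathring{\mathbf{V}}_h=\mathbf{V}_h\cap\mathbf{H}^1_0(\Omega_h)$; $\mathring{Q}_h$ = discontinuous piecewise $\mathcal{P}_1$ functions on $\mathcal{T}_h^{ct}$ with zero mean on $\Omega_h$; $\mathring{X}_h=\{\mu\in C(\partial\Omega_h):\mu|_e\in\mathcal{P}_2(e)\ \forall e,\ \int_{\partial\Omega_h}\mu=0\}$. $b_h(\mathbf{v},(q,\mu))=-\int_{\Omega_h}(\operatorname{div}\mathbf{v})q\,dx+\int_{\partial\Omega_h}(\mathbf{v}\cdot\mathbf{n}_h)\mu\,ds$. Norms: $\|\mathbf{v}\|_{1,h}^2=\|\nabla\mathbf{v}\|_{L^2(\Omega_h)}^2+\sum_e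 h_e^{-1}\|\mathbf{v}\|_{L^2(e)}^2$; $\|\mu\|_{-1/2,h}^2=\sum_e h_e\|\mu\|_{L^2(e)}^2$; $\|(q,\mu)\|=\|q\|_{L^2(\Omega_h)}+\|\mu\|_{-1/2,h}$. (Such $h_0,\beta_1,\beta_2$ independent of $h$ exist.) *)

theory Defs
  imports "HOL-Analysis.Analysis"
begin

type_synonym pt = "real^2"

text \<open>C-infinity functions on the plane (all partial derivatives of all orders exist).\<close>
coinductive smooth2 :: "(pt \<Rightarrow> real) \<Rightarrow> bool" where
  "(\<forall>x. (f has_derivative D x) (at x)) \<Longrightarrow> (\<forall>j. smooth2 (\<lambda>x. D x (axis j 1))) \<Longrightarrow> smooth2 f"

definition smooth_bounded_domain :: "pt set \<Rightarrow> bool" where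
  "smooth_bounded_domain \<Omega> \<longleftrightarrow> bounded \<Omega> \<and> \<Omega> \<noteq> {} \<and>
     (\<exists>\<phi>. smooth2 \<phi> \<and> \<Omega> = {x. \<phi> x < 0} \<and>
          (\<forall>x. \<phi> x = 0 \<longrightarrow> frechet_derivative \<phi> (at x) \<noteq> (\<lambda>_. 0)))"

definition is_tri :: "pt set \<Rightarrow> bool" where
  "is_tri T \<longleftrightarrow> (\<exists>a b c. \<not> collinear {a, b, c} \<and> T = convex hull {a, b, c})"

definition verts :: "pt set \<Rightarrow> pt set" where
  "verts T = {x. x extreme_point_of T}"

definition conforming :: "pt set set \<Rightarrow> bool" where
  "conforming M \<longleftrightarrow> (\<forall>T1\<in>M. \<forall>T2\<in>M. T1 \<noteq> T2 \<longrightarrow> T1 \<inter> T2 = convex hull (verts T1 \<inter> verts T2))"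

definition triangulation_of :: "pt set set \<Rightarrow> pt set \<Rightarrow> bool" where
  "triangulation_of M S \<longleftrightarrow> finite M \<and> M \<noteq> {} \<and> (\<forall>T\<in>M. is_tri T) \<and> conforming M \<and> \<Union>M = S"

definition inradius :: "pt set \<Rightarrow> real" where
  "inradius T = Sup {r. \<exists>c. ball c r \<subseteq> T}"

text \<open>A family of quasi-uniform, shape-regular triangulations Sh h (h in H) of mesh size h
  of a polygon S containing the smooth bounded domain \<Omega>.\<close>
definition admissible_family :: "pt set \<Rightarrow> pt set \<Rightarrow> real set \<Rightarrow> (real \<Rightarrow> pt set set) \<Rightarrow> bool" where
  "admissible_family \<Omega> S H Sh \<longleftrightarrow>
     smooth_bounded_domain \<Omega> \<and> \<Omega> \<subseteq> S \<and>
     (\<forall>h\<in>H. h > 0 \<and> triangulation_of (Sh h) S \<and> h = Max (diameter ` Sh h)) \<and>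
     (\<exists>\<sigma>>0. \<forall>h\<in>H. \<forall>T\<in>Sh h. diameter T \<le> \<sigma> * inradius T) \<and>
     (\<exists>c>0. \<forall>h\<in>H. \<forall>T\<in>Sh h. c * h \<le> diameter T)"

definition Th :: "pt set \<Rightarrow> pt set set \<Rightarrow> pt set set" where
  "Th \<Omega> M = {T\<in>M. T \<subseteq> closure \<Omega>}"

definition Omh :: "pt set \<Rightarrow> pt set set \<Rightarrow> pt set" where
  "Omh \<Omega> M = interior (\<Union>(Th \<Omega> M))"

definition ct_sub :: "pt set \<Rightarrow> pt set \<Rightarrow> bool" where
  "ct_sub T K \<longleftrightarrow> (\<exists>a b c. \<not> collinear {a, b, c} \<and> T = convex hull {a, b, c} \<and>
                      K = convex hull {a, b, (1/3) *\<^sub>R (a + b + c)})"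

definition CT :: "pt set \<Rightarrow> pt set set \<Rightarrow> pt set set" where
  "CT \<Omega> M = {K. \<exists>T\<in>Th \<Omega> M. ct_sub T K}"

definition EB :: "pt set \<Rightarrow> pt set set \<Rightarrow> pt set set" where
  "EB \<Omega> M = {e. \<exists>T\<in>Th \<Omega> M. \<exists>a b c. \<not> collinear {a, b, c} \<and> T = convex hull {a, b, c} \<and>
                  e = closed_segment a b \<and> e \<subseteq> frontier (Omh \<Omega> M)}"

text \<open>Line integral over a straight edge (independent of the orientation chosen).\<close>
definition eint :: "pt set \<Rightarrow> (pt \<Rightarrow> real) \<Rightarrow> real" where
  "eint e f = (SOME I. \<exists>a b. a \<noteq> b \<and> e = closed_segment a b \<and>
                  I = dist a b * integral {0..1} (\<lambda>t. f (a + t *\<^sub>R (b - a))))"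

definition nrm :: "pt set \<Rightarrow> pt set set \<Rightarrow> pt set \<Rightarrow> pt" where
  "nrm \<Omega> M e = (SOME n. norm n = 1 \<and> (\<forall>x\<in>e. \<forall>y\<in>e. n \<bullet> (x - y) = 0) \<and>
                   (\<exists>T\<in>Th \<Omega> M. e \<subseteq> T \<and> (\<forall>x\<in>e. \<forall>y\<in>T. n \<bullet> (y - x) \<le> 0)))"

text \<open>Trace on the boundary edge e of a piecewise polynomial function: limit from the
  interior of the refined element containing e.\<close>
definition tr :: "pt set \<Rightarrow> pt set set \<Rightarrow> (pt \<Rightarrow> pt) \<Rightarrow> pt set \<Rightarrow> pt \<Rightarrow> pt" where
  "tr \<Omega> M v e x = Lim (at x within \<Union>{interior K | K. K \<in> CT \<Omega> M \<and> e \<subseteq> K}) v"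

definition P2vec :: "(pt \<Rightarrow> pt) \<Rightarrow> bool" where
  "P2vec p \<longleftrightarrow> (\<exists>c0 c1 c2 c3 c4 c5 :: pt. \<forall>x. p x = c0 + (x$1) *\<^sub>R c1 + (x$2) *\<^sub>R c2
        + ((x$1)^2) *\<^sub>R c3 + (x$1 * x$2) *\<^sub>R c4 + ((x$2)^2) *\<^sub>R c5)"

definition P1 :: "(pt \<Rightarrow> real) \<Rightarrow> bool" where
  "P1 p \<longleftrightarrow> (\<exists>a b c :: real. \<forall>x. p x = a + b * x$1 + c * x$2)"

definition Vh :: "pt set \<Rightarrow> pt set set \<Rightarrow> (pt \<Rightarrow> pt) set" where
  "Vh \<Omega> M = {v. continuous_on (Omh \<Omega> M) v \<and>
               (\<forall>K\<in>CT \<Omega> M. \<exists>p. P2vec p \<and> (\<forall>x\<in>interior K. v x = p x)) \<and>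
               (\<forall>x. x \<notin> Omh \<Omega> M \<longrightarrow> v x = 0) \<and>
               (\<Sum>e\<in>EB \<Omega> M. eint e (\<lambda>x. tr \<Omega> M v e x \<bullet> nrm \<Omega> M e)) = 0}"

definition V0h :: "pt set \<Rightarrow> pt set set \<Rightarrow> (pt \<Rightarrow> pt) set" where
  "V0h \<Omega> M = {v\<in>Vh \<Omega> M. \<forall>e\<in>EB \<Omega> M. \<forall>x\<in>e. tr \<Omega> M v e x = 0}"

definition Q0h :: "pt set \<Rightarrow> pt set set \<Rightarrow> (pt \<Rightarrow> real) set" where
  "Q0h \<Omega> M = {q. (\<forall>K\<in>CT \<Omega> M. \<exists>p. P1 p \<and> (\<forall>x\<in>interior K. q x = p x)) \<and>
                  integral (Omh \<Omega> M) q = 0}"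

definition X0h :: "pt set \<Rightarrow> pt set set \<Rightarrow> (pt \<Rightarrow> real) set" where
  "X0h \<Omega> M = {\<mu>. continuous_on (frontier (Omh \<Omega> M)) \<mu> \<and>
                  (\<forall>e\<in>EB \<Omega> M. \<forall>a b. e = closed_segment a b \<longrightarrow>
                     (\<exists>c0 c1 c2. \<forall>t\<in>{0..1}. \<mu> (a + t *\<^sub>R (b - a)) = c0 + c1 * t + c2 * t^2)) \<and>
                  (\<Sum>e\<in>EB \<Omega> M. eint e \<mu>) = 0}"

definition pdiff :: "(pt \<Rightarrow> pt) \<Rightarrow> pt \<Rightarrow> 2 \<Rightarrow> pt" where
  "pdiff v x j = frechet_derivative v (at x) (axis j 1)"

definition divg :: "(pt \<Rightarrow> pt) \<Rightarrow> pt \<Rightarrow> real" where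
  "divg v x = pdiff v x 1 $ 1 + pdiff v x 2 $ 2"

definition grad_sq :: "(pt \<Rightarrow> pt) \<Rightarrow> pt \<Rightarrow> real" where
  "grad_sq v x = (\<Sum>j\<in>UNIV. (norm (pdiff v x j))^2)"

definition gradL2 :: "pt set \<Rightarrow> pt set set \<Rightarrow> (pt \<Rightarrow> pt) \<Rightarrow> real" where
  "gradL2 \<Omega> M v = sqrt (integral (Omh \<Omega> M) (grad_sq v))"

definition norm1h :: "pt set \<Rightarrow> pt set set \<Rightarrow> (pt \<Rightarrow> pt) \<Rightarrow> real" where
  "norm1h \<Omega> M v = sqrt ((gradL2 \<Omega> M v)^2 +
      (\<Sum>e\<in>EB \<Omega> M. (1 / diameter e) * eint e (\<lambda>x. (norm (tr \<Omega> M v e x))^2)))"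

definition L2n :: "pt set \<Rightarrow> pt set set \<Rightarrow> (pt \<Rightarrow> real) \<Rightarrow> real" where
  "L2n \<Omega> M q = sqrt (integral (Omh \<Omega> M) (\<lambda>x. (q x)^2))"

definition mnorm :: "pt set \<Rightarrow> pt set set \<Rightarrow> (pt \<Rightarrow> real) \<Rightarrow> real" where
  "mnorm \<Omega> M \<mu> = sqrt (\<Sum>e\<in>EB \<Omega> M. diameter e * eint e (\<lambda>x. (\<mu> x)^2))"

definition bnd_pair :: "pt set \<Rightarrow> pt set set \<Rightarrow> (pt \<Rightarrow> pt) \<Rightarrow> (pt \<Rightarrow> real) \<Rightarrow> real" where
  "bnd_pair \<Omega> M v \<mu> = (\<Sum>e\<in>EB \<Omega> M. eint e (\<lambda>x. (tr \<Omega> M v e x \<bullet> nrm \<Omega> M e) * \<mu> x))"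

definition bh :: "pt set \<Rightarrow> pt set set \<Rightarrow> (pt \<Rightarrow> pt) \<Rightarrow> (pt \<Rightarrow> real) \<Rightarrow> (pt \<Rightarrow> real) \<Rightarrow> real" where
  "bh \<Omega> M v q \<mu> = - integral (Omh \<Omega> M) (\<lambda>x. divg v x * q x) + bnd_pair \<Omega> M v \<mu>"

definition infsup1 :: "pt set \<Rightarrow> pt set set \<Rightarrow> real \<Rightarrow> bool" where
  "infsup1 \<Omega> M \<beta>1 \<longleftrightarrow> (\<forall>q\<in>Q0h \<Omega> M. ereal (\<beta>1 * L2n \<Omega> M q) \<le>
      (SUP v\<in>V0h \<Omega> M - {\<lambda>_. 0}. ereal (integral (Omh \<Omega> M) (\<lambda>x. divg v x * q x) / gradL2 \<Omega> M v)))"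

definition infsup2 :: "pt set \<Rightarrow> pt set set \<Rightarrow> real \<Rightarrow> bool" where
  "infsup2 \<Omega> M \<beta>2 \<longleftrightarrow> (\<forall>\<mu>\<in>X0h \<Omega> M. ereal (\<beta>2 * mnorm \<Omega> M \<mu>) \<le>
      (SUP v\<in>Vh \<Omega> M - {\<lambda>_. 0}. ereal (bnd_pair \<Omega> M v \<mu> / norm1h \<Omega> M v)))"

definition infsup_bh :: "pt set \<Rightarrow> pt set set \<Rightarrow> real \<Rightarrow> bool" where
  "infsup_bh \<Omega> M \<beta> \<longleftrightarrow> (\<forall>q\<in>Q0h \<Omega> M. \<forall>\<mu>\<in>X0h \<Omega> M.
      ereal (\<beta> * (L2n \<Omega> M q + mnorm \<Omega> M \<mu>)) \<le>
      (SUP v\<in>Vh \<Omega> M - {\<lambda>_. 0}. ereal (bh \<Omega> M v q \<mu> / norm1h \<Omega> M v)))"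

end

theory Submission
  imports Defs
begin

definition PW :: "pt set \<Rightarrow> pt set set \<Rightarrow> (pt \<Rightarrow> real) \<Rightarrow> bool" where
  "PW \<Omega> M f \<longleftrightarrow> (\<forall>K\<in>CT \<Omega> M. \<exists>g. continuous_on UNIV g \<and> (\<forall>x\<in>interior K. f x = g x))"

lemma tri_cover:
  fixes a b c :: pt
  defines "g \<equiv> (1/3) *\<^sub>R (a + b + c)"
  shows "convex hull {a,b,c} \<subseteq> convex hull {a,b,g} \<union> convex hull {b,c,g} \<union> convex hull {c,a,g}"
proof
  fix x assume "x \<in> convex hull {a,b,c}"
  then obtain u v w where uvw: "0\<le>u" "0\<le>v" "0\<le>w" "u+v+w=1" "x = u *\<^sub>R a + v *\<^sub>R b + w *\<^sub>R c"
    by (auto simp: convex_hull_3)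
  consider "w \<le> u \<and> w \<le> v" | "u \<le> v \<and> u \<le> w" | "v \<le> u \<and> v \<le> w" by linarith
  then show "x \<in> convex hull {a,b,g} \<union> convex hull {b,c,g} \<union> convex hull {c,a,g}"
  proof cases
    case 1
    have "x = (u-w) *\<^sub>R a + (v-w) *\<^sub>R b + (3*w) *\<^sub>R g" using uvw
      by (simp add: g_def algebra_simps)
    moreover have "0 \<le> u-w" "0 \<le> v-w" "0 \<le> 3*w" "(u-w)+(v-w)+3*w = 1" using 1 uvw by auto
    ultimately have "x \<in> convex hull {a,b,g}" unfolding convex_hull_3 by blast
    then show ?thesis by blast
  next
    case 2
    have "x = (v-u) *\<^sub>R b + (w-u) *\<^sub>R c + (3*u) *\<^sub>R g" using uvw
      by (simp add: g_def algebra_simps)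
    moreover have "0 \<le> v-u" "0 \<le> w-u" "0 \<le> 3*u" "(v-u)+(w-u)+3*u = 1" using 2 uvw by auto
    ultimately have "x \<in> convex hull {b,c,g}" unfolding convex_hull_3 by blast
    then show ?thesis by blast
  next
    case 3
    have "x = (w - v) *\<^sub>R c + (u - v) *\<^sub>R a + (3 * v) *\<^sub>R g" using uvw
      by (simp add: g_def algebra_simps)
    moreover have "0 \<le> w - v" "0 \<le> u - v" "0 \<le> 3 * v" "(w - v) + (u - v) + 3 * v = 1" using 3 uvw by auto
    ultimately have "x \<in> convex hull {c,a,g}" unfolding convex_hull_3 by blast
    then show ?thesis by blast
  qed
qed

lemma centroid_in:
  fixes a b c :: pt
  shows "(1/3) *\<^sub>R (a + b + c) \<in> convex hull {a,b,c}"
proof -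
  have "(1/3) *\<^sub>R (a + b + c) = (1/3) *\<^sub>R a + (1/3) *\<^sub>R b + (1/3) *\<^sub>R c" by (simp add: algebra_simps)
  then show ?thesis unfolding convex_hull_3 by fastforce
qed

lemma sub_hull:
  fixes a b c g :: pt
  assumes "g \<in> convex hull {a,b,c}"
  shows "convex hull {a,b,g} \<subseteq> convex hull {a,b,c}"
  by (rule hull_minimal) (use assms in \<open>auto intro: hull_inc\<close>)

lemma pw_integrable:
  fixes f :: "pt \<Rightarrow> real"
  assumes fin: "finite M" and tri: "\<forall>T\<in>M. is_tri T" and pw: "PW \<Omega> M f"
  shows "f integrable_on Omh \<Omega> M"
proof -
  have finTh: "finite (Th \<Omega> M)" using fin by (simp add: Th_def)
  have "\<forall>T\<in>Th \<Omega> M. \<exists>p::pt\<times>pt\<times>pt. \<not> collinear {fst p, fst (snd p), snd (snd p)} \<and>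
          T = convex hull {fst p, fst (snd p), snd (snd p)}"
  proof
    fix T assume "T \<in> Th \<Omega> M"
    then have "is_tri T" using tri by (auto simp: Th_def)
    then obtain a b c where "\<not> collinear {a,b,c}" "T = convex hull {a,b,c}" by (auto simp: is_tri_def)
    then show "\<exists>p::pt\<times>pt\<times>pt. \<not> collinear {fst p, fst (snd p), snd (snd p)} \<and>
          T = convex hull {fst p, fst (snd p), snd (snd p)}" by (intro exI[of _ "(a,b,c)"]) simp
  qed
  then obtain r where r: "\<forall>T\<in>Th \<Omega> M. \<not> collinear {fst (r T), fst (snd (r T)), snd (snd (r T))} \<and>
          T = convex hull {fst (r T), fst (snd (r T)), snd (snd (r T))}"
    by (metis bchoice)
  define A where "A = (\<lambda>T. fst (r T))"
  define B where "B = (\<lambda>T. fst (snd (r T)))"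
  define C where "C = (\<lambda>T. snd (snd (r T)))"
  define G where "G = (\<lambda>T. (1/3) *\<^sub>R (A T + B T + C T))"
  have rT: "\<And>T. T \<in> Th \<Omega> M \<Longrightarrow> \<not> collinear {A T, B T, C T} \<and> T = convex hull {A T, B T, C T}"
    using r by (simp add: A_def B_def C_def)
  define sub where "sub = (\<lambda>T. {convex hull {A T, B T, G T}, convex hull {B T, C T, G T}, convex hull {C T, A T, G T}})"
  define F where "F = \<Union> (sub ` Th \<Omega> M)"
  have finF: "finite F" unfolding F_def sub_def using finTh by auto
  have FCT: "F \<subseteq> CT \<Omega> M"
  proof
    fix K assume "K \<in> F"
    then obtain T where T: "T \<in> Th \<Omega> M" "K \<in> sub T" unfolding F_def by auto
    note rt = rT[OF T(1)]
    have c1: "ct_sub T (convex hull {A T, B T, G T})"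
      unfolding ct_sub_def G_def using rt by blast
    have c2: "ct_sub T (convex hull {B T, C T, G T})"
      unfolding ct_sub_def G_def using rt
      by (intro exI[of _ "B T"] exI[of _ "C T"] exI[of _ "A T"]) (auto simp: insert_commute add_ac)
    have c3: "ct_sub T (convex hull {C T, A T, G T})"
      unfolding ct_sub_def G_def using rt
      by (intro exI[of _ "C T"] exI[of _ "A T"] exI[of _ "B T"]) (auto simp: insert_commute add_ac)
    show "K \<in> CT \<Omega> M" using T c1 c2 c3 unfolding CT_def sub_def by auto
  qed
  have Fcc: "\<forall>K\<in>F. convex K \<and> compact K" unfolding F_def sub_def
    by (auto intro!: compact_convex_hull[OF finite_imp_compact])
  have KT: "\<forall>K\<in>F. K \<subseteq> \<Union>(Th \<Omega> M)"
  proof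
    fix K assume "K \<in> F"
    then obtain T where T: "T \<in> Th \<Omega> M" "K \<in> sub T" unfolding F_def by auto
    note rt = rT[OF T(1)]
    have g: "G T \<in> convex hull {A T, B T, C T}" unfolding G_def by (rule centroid_in)
    have g2: "G T \<in> convex hull {B T, C T, A T}" using g by (simp add: insert_commute)
    have g3: "G T \<in> convex hull {C T, A T, B T}" using g by (simp add: insert_commute)
    have "K \<subseteq> T" using T(2) unfolding sub_def
      using sub_hull[OF g] sub_hull[OF g2] sub_hull[OF g3] rt by (auto simp: insert_commute)
    then show "K \<subseteq> \<Union>(Th \<Omega> M)" using T(1) by auto
  qed
  have cover: "\<Union>(Th \<Omega> M) \<subseteq> \<Union>F"
  proof
    fix x assume "x \<in> \<Union>(Th \<Omega> M)"
    then obtain T where T: "T \<in> Th \<Omega> M" "x \<in> T" by auto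
    note rt = rT[OF T(1)]
    have "x \<in> convex hull {A T, B T, G T} \<union> convex hull {B T, C T, G T} \<union> convex hull {C T, A T, G T}"
      using tri_cover[of "A T" "B T" "C T"] T(2) rt unfolding G_def by auto
    then show "x \<in> \<Union>F" using T(1) unfolding F_def sub_def by auto
  qed
  define U where "U = \<Union> (interior ` F)"
  have UO: "U \<subseteq> Omh \<Omega> M" unfolding U_def Omh_def using KT by (auto intro: interior_mono[THEN subsetD])
  have neg: "negligible (Omh \<Omega> M - U)"
  proof (rule negligible_subset)
    show "negligible (\<Union> (frontier ` F))"
      using finF Fcc by (auto intro!: negligible_Union negligible_convex_frontier)
    show "Omh \<Omega> M - U \<subseteq> \<Union> (frontier ` F)"
    proof
      fix x assume x: "x \<in> Omh \<Omega> M - U"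
      then have "x \<in> \<Union>(Th \<Omega> M)" unfolding Omh_def using interior_subset by blast
      then obtain K where K: "K \<in> F" "x \<in> K" using cover by auto
      have "x \<notin> interior K" using x K unfolding U_def by auto
      moreover have "closure K = K" using Fcc K(1) by (simp add: compact_imp_closed)
      ultimately show "x \<in> \<Union> (frontier ` F)" using K unfolding frontier_def by auto
    qed
  qed
  have cont: "continuous_on U f" unfolding U_def
  proof (rule continuous_on_open_Union)
    fix s assume "s \<in> interior ` F"
    then obtain K where K: "K \<in> F" "s = interior K" by auto
    then obtain g where g: "continuous_on UNIV g" "\<forall>x\<in>interior K. f x = g x"
      using pw FCT unfolding PW_def by blast
    show "open s" using K by simp
    show "continuous_on s f" using K g
      by (metis continuous_on_eq continuous_on_subset subset_UNIV)
  qed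
  have "\<forall>K\<in>F. \<exists>b. \<forall>x\<in>interior K. norm (f x) \<le> b"
  proof
    fix K assume K: "K \<in> F"
    then obtain g where g: "continuous_on UNIV g" "\<forall>x\<in>interior K. f x = g x"
      using pw FCT unfolding PW_def by blast
    have "compact (g ` K)" using g(1) Fcc K by (metis compact_continuous_image continuous_on_subset subset_UNIV)
    then obtain b where "\<forall>y\<in>g ` K. norm y \<le> b" using compact_imp_bounded bounded_iff by metis
    then show "\<exists>b. \<forall>x\<in>interior K. norm (f x) \<le> b" using g(2) interior_subset by fastforce
  qed
  then obtain bf where bf: "\<forall>K\<in>F. \<forall>x\<in>interior K. norm (f x) \<le> bf K" by metis
  define Bd where "Bd = (\<Sum>K\<in>F. \<bar>bf K\<bar>)"
  have bnd: "\<forall>x\<in>U. norm (f x) \<le> Bd"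
  proof
    fix x assume "x \<in> U"
    then obtain K where K: "K \<in> F" "x \<in> interior K" unfolding U_def by auto
    have "norm (f x) \<le> bf K" using bf K by blast
    also have "\<dots> \<le> \<bar>bf K\<bar>" by simp
    also have "\<dots> \<le> Bd" unfolding Bd_def using finF K(1) by (intro member_le_sum) auto
    finally show "norm (f x) \<le> Bd" .
  qed
  have "open U" unfolding U_def by auto
  then have Uleb: "U \<in> sets lebesgue" by simp
  have Ubdd: "bounded U"
  proof -
    have "bounded (\<Union>F)" using finF Fcc by (auto intro!: bounded_Union compact_imp_bounded)
    moreover have "U \<subseteq> \<Union>F" unfolding U_def using interior_subset by blast
    ultimately show ?thesis using bounded_subset by blast
  qed
  have "f integrable_on U"
  proof (rule measurable_bounded_by_integrable_imp_integrable)
    show "f \<in> borel_measurable (lebesgue_on U)" using cont Uleb by (rule continuous_imp_measurable_on_sets_lebesgue)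
    show "(\<lambda>x. Bd) integrable_on U" using Ubdd Uleb by (intro integrable_on_const bounded_set_imp_lmeasurable)
    show "\<And>x. x \<in> U \<Longrightarrow> norm (f x) \<le> Bd" using bnd by blast
    show "U \<in> sets lebesgue" by fact
  qed
  then show ?thesis
    by (rule integrable_spike_set) (use UO neg in \<open>auto intro: negligible_subset\<close>)
qed


lemma p2der:
  fixes c0 c1 c2 c3 c4 c5 :: pt
  shows "((\<lambda>x::pt. c0 + (x$1) *\<^sub>R c1 + (x$2) *\<^sub>R c2
        + ((x$1)^2) *\<^sub>R c3 + (x$1 * x$2) *\<^sub>R c4 + ((x$2)^2) *\<^sub>R c5) has_derivative
   (\<lambda>h. h$1 *\<^sub>R c1 + h$2 *\<^sub>R c2 + (2 * x$1 * h$1) *\<^sub>R c3 + (h$1 * x$2 + x$1 * h$2) *\<^sub>R c4 + (2 * x$2 * h$2) *\<^sub>R c5)) (at x)"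
  by (auto intro!: derivative_eq_intros bounded_linear_imp_has_derivative simp: algebra_simps)

lemma pw_deriv:
  assumes v: "v \<in> Vh \<Omega> M" and K: "K \<in> CT \<Omega> M"
  shows "\<exists>Gd::pt \<Rightarrow> 2 \<Rightarrow> pt. (\<forall>j. continuous_on UNIV (\<lambda>x. Gd x j)) \<and>
            (\<forall>x\<in>interior K. \<forall>j. pdiff v x j = Gd x j)"
proof -
  obtain p where p: "P2vec p" "\<forall>x\<in>interior K. v x = p x" using v K unfolding Vh_def by blast
  then obtain c0 c1 c2 c3 c4 c5 :: pt where pc: "\<forall>x. p x = c0 + (x$1) *\<^sub>R c1 + (x$2) *\<^sub>R c2
        + ((x$1)^2) *\<^sub>R c3 + (x$1 * x$2) *\<^sub>R c4 + ((x$2)^2) *\<^sub>R c5" unfolding P2vec_def by blast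
  define D where "D = (\<lambda>(x::pt) (h::pt). h$1 *\<^sub>R c1 + h$2 *\<^sub>R c2 + (2 * x$1 * h$1) *\<^sub>R c3 + (h$1 * x$2 + x$1 * h$2) *\<^sub>R c4 + (2 * x$2 * h$2) *\<^sub>R c5)"
  have peq: "p = (\<lambda>x::pt. c0 + (x$1) *\<^sub>R c1 + (x$2) *\<^sub>R c2
        + ((x$1)^2) *\<^sub>R c3 + (x$1 * x$2) *\<^sub>R c4 + ((x$2)^2) *\<^sub>R c5)" using pc by auto
  have pd: "\<And>x. (p has_derivative D x) (at x)" unfolding peq D_def by (rule p2der)
  have "\<forall>x\<in>interior K. \<forall>j. pdiff v x j = D x (axis j 1)"
  proof (intro ballI allI)
    fix x j assume x: "x \<in> interior K"
    have "(v has_derivative D x) (at x)"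
      by (rule has_derivative_transform_within_open[OF pd[of x] open_interior x]) (use p(2) in auto)
    then have "frechet_derivative v (at x) = D x" by (metis frechet_derivative_at)
    then show "pdiff v x j = D x (axis j 1)" by (simp add: pdiff_def)
  qed
  moreover have "\<forall>j. continuous_on UNIV (\<lambda>x. D x (axis j 1))" unfolding D_def
    by (auto intro!: continuous_intros)
  ultimately show ?thesis by (intro exI[of _ "\<lambda>x j. D x (axis j 1)"]) auto
qed

lemma pw_q:
  assumes q: "q \<in> Q0h \<Omega> M" and K: "K \<in> CT \<Omega> M"
  shows "\<exists>g. continuous_on UNIV g \<and> (\<forall>x\<in>interior K. q x = g x)"
proof -
  obtain p where p: "P1 p" "\<forall>x\<in>interior K. q x = p x" using q K unfolding Q0h_def by blast
  then obtain a b c where "\<forall>x. p x = a + b * x$1 + c * x$2" unfolding P1_def by blast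
  then have "p = (\<lambda>x. a + b * x$1 + c * x$2)" by auto
  then have "continuous_on UNIV p" by (auto intro!: continuous_intros)
  then show ?thesis using p(2) by blast
qed

lemma pw_funs:
  assumes v: "v \<in> Vh \<Omega> M" and q: "q \<in> Q0h \<Omega> M"
  shows "PW \<Omega> M (\<lambda>x. divg v x * q x)" "PW \<Omega> M (\<lambda>x. (divg v x)^2)"
        "PW \<Omega> M (\<lambda>x. (q x)^2)" "PW \<Omega> M (grad_sq v)"
proof -
  have *: "\<exists>g1 g2 g3 g4. continuous_on UNIV g1 \<and> continuous_on UNIV g2 \<and> continuous_on UNIV g3 \<and> continuous_on UNIV g4 \<and>
     (\<forall>x\<in>interior K. divg v x * q x = g1 x \<and> (divg v x)^2 = g2 x \<and> (q x)^2 = g3 x \<and> grad_sq v x = g4 x)"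
    if K: "K \<in> CT \<Omega> M" for K
  proof -
    obtain Gd :: "pt \<Rightarrow> 2 \<Rightarrow> pt" where G: "\<forall>j. continuous_on UNIV (\<lambda>x. Gd x j)"
        "\<forall>x\<in>interior K. \<forall>j. pdiff v x j = Gd x j" using pw_deriv[OF v K] by blast
    obtain g where g: "continuous_on UNIV g" "\<forall>x\<in>interior K. q x = g x" using pw_q[OF q K] by blast
    have c1: "continuous_on UNIV (\<lambda>x. Gd x 1 $ 1 + Gd x 2 $ 2)" using G(1) by (auto intro!: continuous_intros)
    have c4: "continuous_on UNIV (\<lambda>x. \<Sum>j\<in>UNIV. (norm (Gd x j))^2)" using G(1) by (auto intro!: continuous_intros)
    show ?thesis
      apply (rule exI[of _ "\<lambda>x. (Gd x 1 $ 1 + Gd x 2 $ 2) * g x"])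
      apply (rule exI[of _ "\<lambda>x. (Gd x 1 $ 1 + Gd x 2 $ 2)^2"])
      apply (rule exI[of _ "\<lambda>x. (g x)^2"])
      apply (rule exI[of _ "\<lambda>x. \<Sum>j\<in>UNIV. (norm (Gd x j))^2"])
      using c1 c4 g G by (auto intro!: continuous_intros simp: divg_def grad_sq_def)
  qed
  show "PW \<Omega> M (\<lambda>x. divg v x * q x)" unfolding PW_def using * by metis
  show "PW \<Omega> M (\<lambda>x. (divg v x)^2)" unfolding PW_def using * by metis
  show "PW \<Omega> M (\<lambda>x. (q x)^2)" unfolding PW_def using * by metis
  show "PW \<Omega> M (grad_sq v)" unfolding PW_def using * by metis
qed

lemma integral_nonneg':
  fixes f :: "pt \<Rightarrow> real"
  shows "(\<And>x. x \<in> S \<Longrightarrow> 0 \<le> f x) \<Longrightarrow> 0 \<le> integral S f"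
  by (cases "f integrable_on S") (auto intro: integral_nonneg simp: not_integrable_integral)

lemma integral_nonneg_real:
  fixes f :: "real \<Rightarrow> real"
  shows "(\<And>x. x \<in> S \<Longrightarrow> 0 \<le> f x) \<Longrightarrow> 0 \<le> integral S f"
  by (cases "f integrable_on S") (auto intro: integral_nonneg simp: not_integrable_integral)

lemma cs:
  fixes f g :: "pt \<Rightarrow> real"
  assumes i1: "(\<lambda>x. (f x)^2) integrable_on S" and i2: "(\<lambda>x. (g x)^2) integrable_on S"
    and i3: "(\<lambda>x. f x * g x) integrable_on S"
  shows "\<bar>integral S (\<lambda>x. f x * g x)\<bar> \<le> sqrt (integral S (\<lambda>x. (f x)^2)) * sqrt (integral S (\<lambda>x. (g x)^2))"
proof -
  define A where "A = integral S (\<lambda>x. (f x)^2)"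
  define Bc where "Bc = integral S (\<lambda>x. f x * g x)"
  define C where "C = integral S (\<lambda>x. (g x)^2)"
  have quad: "0 \<le> t^2 * A - 2 * t * Bc + C" for t
  proof -
    have ia: "(\<lambda>x. t^2 * (f x)^2) integrable_on S" using integrable_on_cmult_left[OF i1, of "t^2"] by simp
    have ib: "(\<lambda>x. (2 * t) * (f x * g x)) integrable_on S" using integrable_on_cmult_left[OF i3, of "2*t"] by simp
    have "integral S (\<lambda>x. t^2 * (f x)^2 - (2 * t) * (f x * g x) + (g x)^2) = t^2 * A - 2 * t * Bc + C"
      using ia ib i2 by (simp add: integral_add integral_diff integrable_diff A_def Bc_def C_def)
    moreover have "0 \<le> integral S (\<lambda>x. t^2 * (f x)^2 - (2 * t) * (f x * g x) + (g x)^2)"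
    proof (rule integral_nonneg')
      fix x
      have "t^2 * (f x)^2 - (2 * t) * (f x * g x) + (g x)^2 = (t * f x - g x)^2" by (simp add: power2_eq_square algebra_simps)
      then show "0 \<le> t^2 * (f x)^2 - (2 * t) * (f x * g x) + (g x)^2" by simp
    qed
    ultimately show ?thesis by simp
  qed
  have A0: "0 \<le> A" unfolding A_def by (rule integral_nonneg') simp
  have C0: "0 \<le> C" unfolding C_def by (rule integral_nonneg') simp
  have "Bc^2 \<le> A * C"
  proof (cases "A = 0")
    case True
    have "Bc = 0"
    proof (rule ccontr)
      assume "Bc \<noteq> 0"
      have "0 \<le> ((C+1)/(2*Bc))^2 * A - 2 * ((C+1)/(2*Bc)) * Bc + C" by (rule quad)
      then show False using True \<open>Bc \<noteq> 0\<close> by (simp add: field_simps)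
    qed
    then show ?thesis using True by simp
  next
    case False
    then have Ap: "A > 0" using A0 by simp
    have "0 \<le> (Bc/A)^2 * A - 2 * (Bc/A) * Bc + C" by (rule quad)
    also have "(Bc/A)^2 * A - 2 * (Bc/A) * Bc + C = C - Bc^2 / A" using Ap by (simp add: field_simps power2_eq_square)
    finally have "Bc^2 / A \<le> C" by simp
    then show ?thesis using Ap by (simp add: field_simps mult.commute)
  qed
  then have "sqrt (Bc^2) \<le> sqrt (A * C)" by (rule real_sqrt_le_mono)
  then show ?thesis by (simp add: A_def Bc_def C_def real_sqrt_mult)
qed


lemma EB_seg:
  assumes "e \<in> EB \<Omega> M"
  shows "\<exists>a b. a \<noteq> b \<and> e = closed_segment a b"
proof -
  obtain a b c where "\<not> collinear {a, b, c}" "e = closed_segment a b" using assms unfolding EB_def by blast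
  moreover have "a \<noteq> b" using calculation(1) by (metis collinear_2 insert_absorb2)
  ultimately show ?thesis by blast
qed

lemma seg_pt:
  fixes a b :: pt
  assumes "t \<in> {0..1}"
  shows "a + t *\<^sub>R (b - a) \<in> closed_segment a b"
proof -
  have "a + t *\<^sub>R (b - a) = (1 - t) *\<^sub>R a + t *\<^sub>R b" by (simp add: algebra_simps)
  then show ?thesis using assms unfolding in_segment by auto
qed

lemma eint_char:
  assumes "a \<noteq> b" "e = closed_segment a b"
  shows "\<exists>a' b'. a' \<noteq> b' \<and> e = closed_segment a' b' \<and>
            eint e f = dist a' b' * integral {0..1} (\<lambda>t. f (a' + t *\<^sub>R (b' - a')))"
proof -
  let ?P = "\<lambda>I. \<exists>a b. a \<noteq> b \<and> e = closed_segment a b \<and>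
                  I = dist a b * integral {0..1} (\<lambda>t. f (a + t *\<^sub>R (b - a)))"
  have "\<exists>I. ?P I" using assms by blast
  then have "?P (SOME I. ?P I)" by (rule someI_ex)
  then show ?thesis unfolding eint_def .
qed

lemma eint_zero:
  assumes "e \<in> EB \<Omega> M" "\<forall>x\<in>e. f x = 0"
  shows "eint e f = 0"
proof -
  obtain a b where "a \<noteq> b" "e = closed_segment a b" using EB_seg[OF assms(1)] by blast
  then obtain a' b' where ab: "e = closed_segment a' b'"
     "eint e f = dist a' b' * integral {0..1} (\<lambda>t. f (a' + t *\<^sub>R (b' - a')))"
    using eint_char by blast
  have z: "\<And>t. t \<in> {0..1} \<Longrightarrow> f (a' + t *\<^sub>R (b' - a')) = 0"
    using assms(2) ab(1) seg_pt by blast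
  have "integral {0..1} (\<lambda>t. f (a' + t *\<^sub>R (b' - a'))) = 0"
    using Henstock_Kurzweil_Integration.integral_cong[of "{0..1}" "\<lambda>t. f (a' + t *\<^sub>R (b' - a'))" "\<lambda>t. 0"] z by simp
  then show ?thesis using ab(2) by simp
qed

lemma eint_nonneg:
  assumes "e \<in> EB \<Omega> M" "\<forall>x\<in>e. 0 \<le> f x"
  shows "0 \<le> eint e f"
proof -
  obtain a b where "a \<noteq> b" "e = closed_segment a b" using EB_seg[OF assms(1)] by blast
  then obtain a' b' where ab: "e = closed_segment a' b'"
     "eint e f = dist a' b' * integral {0..1} (\<lambda>t. f (a' + t *\<^sub>R (b' - a')))"
    using eint_char by blast
  have "0 \<le> integral {0..1} (\<lambda>t. f (a' + t *\<^sub>R (b' - a')))"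
    by (rule integral_nonneg_real) (use assms(2) ab(1) seg_pt in blast)
  then show ?thesis using ab(2) by simp
qed

lemma gradL2_nonneg: "0 \<le> gradL2 \<Omega> M v"
  unfolding gradL2_def grad_sq_def by (intro real_sqrt_ge_zero integral_nonneg' sum_nonneg) simp

lemma L2n_nonneg: "0 \<le> L2n \<Omega> M q"
  unfolding L2n_def by (intro real_sqrt_ge_zero integral_nonneg') simp

lemma mnorm_nonneg: "0 \<le> mnorm \<Omega> M \<mu>"
  unfolding mnorm_def
proof (intro real_sqrt_ge_zero sum_nonneg)
  fix e assume e: "e \<in> EB \<Omega> M"
  then obtain a b where "e = closed_segment a b" using EB_seg by blast
  then have "0 \<le> diameter e" by (intro diameter_ge_0) (simp add: bounded_closed_segment)
  moreover have "0 \<le> eint e (\<lambda>x. (\<mu> x)^2)" by (rule eint_nonneg[OF e]) simp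
  ultimately show "0 \<le> diameter e * eint e (\<lambda>x. (\<mu> x)^2)" by simp
qed

lemma bsum_nonneg:
  "0 \<le> (\<Sum>e\<in>EB \<Omega> M. (1 / diameter e) * eint e (\<lambda>x. (norm (tr \<Omega> M v e x))^2))"
proof (rule sum_nonneg)
  fix e assume e: "e \<in> EB \<Omega> M"
  then obtain a b where "e = closed_segment a b" using EB_seg by blast
  then have "0 \<le> diameter e" by (intro diameter_ge_0) (simp add: bounded_closed_segment)
  moreover have "0 \<le> eint e (\<lambda>x. (norm (tr \<Omega> M v e x))^2)" by (rule eint_nonneg[OF e]) simp
  ultimately show "0 \<le> (1 / diameter e) * eint e (\<lambda>x. (norm (tr \<Omega> M v e x))^2)" by simp
qed

lemma norm1h_ge: "gradL2 \<Omega> M v \<le> norm1h \<Omega> M v"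
proof -
  have "sqrt ((gradL2 \<Omega> M v)^2) \<le> norm1h \<Omega> M v"
    unfolding norm1h_def using bsum_nonneg[of \<Omega> M v] by (intro real_sqrt_le_mono) simp
  then show ?thesis using gradL2_nonneg[of \<Omega> M v] by simp
qed

lemma V0h_props:
  assumes "v \<in> V0h \<Omega> M"
  shows "norm1h \<Omega> M v = gradL2 \<Omega> M v" "bnd_pair \<Omega> M v \<mu> = 0"
proof -
  have tr0: "\<forall>e\<in>EB \<Omega> M. \<forall>x\<in>e. tr \<Omega> M v e x = 0" using assms unfolding V0h_def by blast
  have "(\<Sum>e\<in>EB \<Omega> M. (1 / diameter e) * eint e (\<lambda>x. (norm (tr \<Omega> M v e x))^2)) = 0"
    by (rule sum.neutral) (use tr0 eint_zero in \<open>force\<close>)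
  then show "norm1h \<Omega> M v = gradL2 \<Omega> M v" unfolding norm1h_def using gradL2_nonneg[of \<Omega> M v] by simp
  show "bnd_pair \<Omega> M v \<mu> = 0" unfolding bnd_pair_def
    by (rule sum.neutral) (use tr0 eint_zero in \<open>force\<close>)
qed

lemma dbound:
  assumes fin: "finite M" and tri: "\<forall>T\<in>M. is_tri T" and v: "v \<in> Vh \<Omega> M" and q: "q \<in> Q0h \<Omega> M"
  shows "\<bar>integral (Omh \<Omega> M) (\<lambda>x. divg v x * q x)\<bar> \<le> sqrt 2 * L2n \<Omega> M q * norm1h \<Omega> M v"
proof -
  let ?O = "Omh \<Omega> M"
  note pf = pw_funs[OF v q]
  have i1: "(\<lambda>x. divg v x * q x) integrable_on ?O" by (rule pw_integrable[OF fin tri pf(1)])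
  have i2: "(\<lambda>x. (divg v x)^2) integrable_on ?O" by (rule pw_integrable[OF fin tri pf(2)])
  have i3: "(\<lambda>x. (q x)^2) integrable_on ?O" by (rule pw_integrable[OF fin tri pf(3)])
  have i4: "grad_sq v integrable_on ?O" by (rule pw_integrable[OF fin tri pf(4)])
  have pt: "(divg v x)^2 \<le> 2 * grad_sq v x" for x
  proof -
    let ?a = "pdiff v x 1 $ 1" and ?b = "pdiff v x 2 $ 2"
    have "\<bar>?a\<bar> \<le> norm (pdiff v x 1)" by (rule component_le_norm_cart)
    then have ha: "?a^2 \<le> (norm (pdiff v x 1))^2" by (metis abs_ge_zero abs_le_square_iff abs_norm_cancel)
    have "\<bar>?b\<bar> \<le> norm (pdiff v x 2)" by (rule component_le_norm_cart)
    then have hb: "?b^2 \<le> (norm (pdiff v x 2))^2" by (metis abs_ge_zero abs_le_square_iff abs_norm_cancel)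
    have "(?a + ?b)^2 \<le> 2 * (?a^2 + ?b^2)" using sum_squares_bound[of ?a ?b]
      by (simp add: power2_eq_square algebra_simps)
    then have "(?a + ?b)^2 \<le> 2 * ((norm (pdiff v x 1))^2 + (norm (pdiff v x 2))^2)" using ha hb by (smt (verit))
    then show ?thesis unfolding divg_def grad_sq_def sum_2 .
  qed
  have "integral ?O (\<lambda>x. (divg v x)^2) \<le> integral ?O (\<lambda>x. 2 * grad_sq v x)"
  proof -
    have i5: "(\<lambda>x. 2 * grad_sq v x) integrable_on ?O" using integrable_on_cmult_left[OF i4, of 2] by simp
    show ?thesis by (rule integral_le[OF i2 i5]) (use pt in auto)
  qed
  also have "\<dots> = 2 * (gradL2 \<Omega> M v)^2"
  proof -
    have "0 \<le> integral ?O (grad_sq v)" unfolding grad_sq_def by (intro integral_nonneg' sum_nonneg) simp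
    then show ?thesis unfolding gradL2_def by simp
  qed
  finally have "sqrt (integral ?O (\<lambda>x. (divg v x)^2)) \<le> sqrt (2 * (gradL2 \<Omega> M v)^2)"
    by (rule real_sqrt_le_mono)
  also have "\<dots> = sqrt 2 * gradL2 \<Omega> M v" using gradL2_nonneg[of \<Omega> M v] by (simp add: real_sqrt_mult)
  also have "\<dots> \<le> sqrt 2 * norm1h \<Omega> M v" using norm1h_ge[of \<Omega> M v] by simp
  finally have s1: "sqrt (integral ?O (\<lambda>x. (divg v x)^2)) \<le> sqrt 2 * norm1h \<Omega> M v" .
  have "\<bar>integral ?O (\<lambda>x. divg v x * q x)\<bar> \<le> sqrt (integral ?O (\<lambda>x. (divg v x)^2)) * sqrt (integral ?O (\<lambda>x. (q x)^2))"
    by (rule cs[OF i2 i3 i1])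
  also have "\<dots> \<le> sqrt 2 * norm1h \<Omega> M v * L2n \<Omega> M q"
    unfolding L2n_def by (rule mult_right_mono[OF s1]) (simp add: integral_nonneg')
  finally show ?thesis by (simp add: mult_ac)
qed


lemma final_ineq:
  fixes a b s \<beta>1 \<beta>2 C lam \<beta> :: real
  assumes a0: "0 \<le> a" and b0: "0 \<le> b" and l0: "0 \<le> lam" and l1: "lam \<le> 1"
    and key: "lam * (\<beta>1 + C) = \<beta>1 / 2"
    and hb1: "\<beta> \<le> \<beta>1 / 2" and hb2: "\<beta> \<le> lam * \<beta>2"
    and s1: "\<beta>1 * a \<le> s" and s2: "\<beta>2 * b \<le> s + C * a"
  shows "\<beta> * (a + b) \<le> s"
proof -
  have h1: "\<beta> * a \<le> (\<beta>1 / 2) * a" using hb1 a0 by (rule mult_right_mono)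
  have h2: "\<beta> * b \<le> (lam * \<beta>2) * b" using hb2 b0 by (rule mult_right_mono)
  have h3: "lam * (\<beta>2 * b) \<le> lam * (s + C * a)" using s2 l0 by (rule mult_left_mono)
  have h4: "(1 - lam) * (\<beta>1 * a) \<le> (1 - lam) * s" using s1 l1 by (intro mult_left_mono) auto
  have k2: "lam * C * a = (\<beta>1 / 2) * a - lam * \<beta>1 * a"
  proof -
    have e: "lam * C = \<beta>1 / 2 - lam * \<beta>1" using key by (simp add: algebra_simps)
    have "lam * C * a = (\<beta>1 / 2 - lam * \<beta>1) * a" by (simp only: e)
    then show ?thesis by (simp add: algebra_simps)
  qed
  have "\<beta> * (a + b) \<le> (\<beta>1 / 2) * a + lam * (\<beta>2 * b)" using h1 h2 by (simp add: algebra_simps)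
  also have "\<dots> \<le> (\<beta>1 / 2) * a + lam * (s + C * a)" using h3 by simp
  also have "\<dots> = lam * s + (1 - lam) * (\<beta>1 * a)" using k2 by (simp add: algebra_simps)
  also have "\<dots> \<le> lam * s + (1 - lam) * s" using h4 by simp
  also have "\<dots> = s" by (simp add: algebra_simps)
  finally show ?thesis .
qed

theorem theorem4p8:
  fixes \<beta>1 \<beta>2 :: real
  assumes "\<beta>1 > 0" and "\<beta>2 > 0"
  shows "\<exists>\<beta>>0. \<forall>(\<Omega>::pt set) (S::pt set) (H::real set) (Sh::real \<Rightarrow> pt set set) (h0::real).
           admissible_family \<Omega> S H Sh \<and> h0 > 0 \<and>
           (\<forall>h\<in>H. h \<le> h0 \<longrightarrow> infsup1 \<Omega> (Sh h) \<beta>1) \<and>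
           (\<forall>h\<in>H. h \<le> h0 \<longrightarrow> infsup2 \<Omega> (Sh h) \<beta>2)
           \<longrightarrow> (\<forall>h\<in>H. h \<le> h0 \<longrightarrow> infsup_bh \<Omega> (Sh h) \<beta>)"
proof -
  define C where "C = sqrt (2::real)"
  define lam where "lam = \<beta>1 / (2 * (\<beta>1 + C))"
  define \<beta> where "\<beta> = min (\<beta>1 / 2) (lam * \<beta>2)"
  have Cpos: "C > 0" unfolding C_def by simp
  have lpos: "lam > 0" unfolding lam_def using assms Cpos by simp
  have key: "lam * (\<beta>1 + C) = \<beta>1 / 2" unfolding lam_def using assms Cpos by (simp add: field_simps)
  have l1: "lam \<le> 1"
  proof -
    have "lam \<le> 1/2" unfolding lam_def using assms Cpos by (simp add: field_simps)
    then show ?thesis by simp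
  qed
  have bpos: "\<beta> > 0" unfolding \<beta>_def using assms lpos by simp
  have main: "infsup_bh \<Omega> (Sh h) \<beta>"
    if adm: "admissible_family \<Omega> S H Sh" and hH: "h \<in> H" and is1: "infsup1 \<Omega> (Sh h) \<beta>1"
      and is2: "infsup2 \<Omega> (Sh h) \<beta>2" for \<Omega> S H Sh h
  proof -
    define M where "M = Sh h"
    have "triangulation_of M S" using adm hH unfolding admissible_family_def M_def by blast
    then have fin: "finite M" and trs: "\<forall>T\<in>M. is_tri T" unfolding triangulation_of_def by auto
    have i1: "infsup1 \<Omega> M \<beta>1" and i2: "infsup2 \<Omega> M \<beta>2" using is1 is2 by (simp_all add: M_def)
    have "infsup_bh \<Omega> M \<beta>" unfolding infsup_bh_def
    proof (intro ballI)
      fix q \<mu> assume q: "q \<in> Q0h \<Omega> M" and \<mu>: "\<mu> \<in> X0h \<Omega> M"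
      define Sp where "Sp = (SUP v\<in>Vh \<Omega> M - {\<lambda>_. 0}. ereal (bh \<Omega> M v q \<mu> / norm1h \<Omega> M v))"
      define a where "a = L2n \<Omega> M q"
      define b where "b = mnorm \<Omega> M \<mu>"
      have a0: "0 \<le> a" unfolding a_def by (rule L2n_nonneg)
      have b0: "0 \<le> b" unfolding b_def by (rule mnorm_nonneg)
      have mq: "(\<lambda>x. - q x) \<in> Q0h \<Omega> M"
      proof -
        have "\<forall>K\<in>CT \<Omega> M. \<exists>p. P1 p \<and> (\<forall>x\<in>interior K. - q x = p x)"
        proof
          fix K assume "K \<in> CT \<Omega> M"
          then obtain p where p: "P1 p" "\<forall>x\<in>interior K. q x = p x" using q unfolding Q0h_def by blast
          then obtain a b c where "\<forall>x. p x = a + b * x$1 + c * x$2" unfolding P1_def by blast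
          then have "P1 (\<lambda>x. - p x)" unfolding P1_def
            by (intro exI[of _ "-a"] exI[of _ "-b"] exI[of _ "-c"]) simp
          then show "\<exists>p. P1 p \<and> (\<forall>x\<in>interior K. - q x = p x)" using p(2) by auto
        qed
        moreover have "integral (Omh \<Omega> M) (\<lambda>x. - q x) = 0" using q unfolding Q0h_def by (simp add: integral_neg)
        ultimately show ?thesis unfolding Q0h_def by blast
      qed
      have La: "L2n \<Omega> M (\<lambda>x. - q x) = a" unfolding L2n_def a_def by simp
      have "ereal (\<beta>1 * L2n \<Omega> M (\<lambda>x. - q x)) \<le> (SUP v\<in>V0h \<Omega> M - {\<lambda>_. 0}.
              ereal (integral (Omh \<Omega> M) (\<lambda>x. divg v x * (- q x)) / gradL2 \<Omega> M v))"
        using i1 mq unfolding infsup1_def by blast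
      also have "\<dots> = (SUP v\<in>V0h \<Omega> M - {\<lambda>_. 0}. ereal (bh \<Omega> M v q \<mu> / norm1h \<Omega> M v))"
      proof (rule SUP_cong[OF refl])
        fix v assume "v \<in> V0h \<Omega> M - {\<lambda>_. 0}"
        then have v: "v \<in> V0h \<Omega> M" by simp
        have "integral (Omh \<Omega> M) (\<lambda>x. divg v x * (- q x)) = - integral (Omh \<Omega> M) (\<lambda>x. divg v x * q x)"
          by (simp add: integral_neg)
        then show "ereal (integral (Omh \<Omega> M) (\<lambda>x. divg v x * (- q x)) / gradL2 \<Omega> M v) =
                   ereal (bh \<Omega> M v q \<mu> / norm1h \<Omega> M v)"
          using V0h_props[OF v] unfolding bh_def by simp
      qed
      also have "\<dots> \<le> Sp" unfolding Sp_def by (rule SUP_subset_mono) (auto simp: V0h_def)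
      finally have s1: "ereal (\<beta>1 * a) \<le> Sp" using La by simp
      have "ereal (\<beta>2 * b) \<le> (SUP v\<in>Vh \<Omega> M - {\<lambda>_. 0}. ereal (bnd_pair \<Omega> M v \<mu> / norm1h \<Omega> M v))"
        using i2 \<mu> unfolding infsup2_def b_def by blast
      also have "\<dots> \<le> Sp + ereal (C * a)"
      proof (rule SUP_least)
        fix v assume vv: "v \<in> Vh \<Omega> M - {\<lambda>_. 0}"
        then have v: "v \<in> Vh \<Omega> M" by simp
        have db: "\<bar>integral (Omh \<Omega> M) (\<lambda>x. divg v x * q x)\<bar> \<le> C * a * norm1h \<Omega> M v"
          using dbound[OF fin trs v q] unfolding C_def a_def .
        have N0: "0 \<le> norm1h \<Omega> M v" using gradL2_nonneg[of \<Omega> M v] norm1h_ge[of \<Omega> M v] by linarith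
        have re: "bnd_pair \<Omega> M v \<mu> / norm1h \<Omega> M v \<le> bh \<Omega> M v q \<mu> / norm1h \<Omega> M v + C * a"
        proof (cases "norm1h \<Omega> M v = 0")
          case True then show ?thesis using a0 Cpos by simp
        next
          case False
          then have Np: "0 < norm1h \<Omega> M v" using N0 by simp
          have "bnd_pair \<Omega> M v \<mu> \<le> bh \<Omega> M v q \<mu> + C * a * norm1h \<Omega> M v"
            unfolding bh_def using db by linarith
          then have "bnd_pair \<Omega> M v \<mu> / norm1h \<Omega> M v \<le> (bh \<Omega> M v q \<mu> + C * a * norm1h \<Omega> M v) / norm1h \<Omega> M v"
            using Np by (simp add: divide_right_mono)
          also have "\<dots> = bh \<Omega> M v q \<mu> / norm1h \<Omega> M v + C * a" using Np by (simp add: field_simps)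
          finally show ?thesis .
        qed
        have "ereal (bnd_pair \<Omega> M v \<mu> / norm1h \<Omega> M v) \<le> ereal (bh \<Omega> M v q \<mu> / norm1h \<Omega> M v) + ereal (C * a)"
          using re by simp
        also have "\<dots> \<le> Sp + ereal (C * a)"
        proof (rule add_right_mono)
          show "ereal (bh \<Omega> M v q \<mu> / norm1h \<Omega> M v) \<le> Sp" unfolding Sp_def using vv by (rule SUP_upper)
        qed
        finally show "ereal (bnd_pair \<Omega> M v \<mu> / norm1h \<Omega> M v) \<le> Sp + ereal (C * a)" .
      qed
      finally have s2: "ereal (\<beta>2 * b) \<le> Sp + ereal (C * a)" .
      have "ereal (\<beta> * (a + b)) \<le> Sp"
      proof (cases Sp)
        case (real s)
        have r1: "\<beta>1 * a \<le> s" using s1 real by simp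
        have r2: "\<beta>2 * b \<le> s + C * a" using s2 real by simp
        have "\<beta> * (a + b) \<le> s"
          by (rule final_ineq[OF a0 b0 _ l1 key _ _ r1 r2]) (use lpos \<beta>_def in auto)
        then show ?thesis using real by simp
      next
        case PInf then show ?thesis by simp
      next
        case MInf then show ?thesis using s1 by simp
      qed
      then show "ereal (\<beta> * (L2n \<Omega> M q + mnorm \<Omega> M \<mu>)) \<le> Sp" unfolding a_def b_def .
    qed
    then show ?thesis unfolding M_def .
  qed
  show ?thesis
    by (rule exI[of _ \<beta>]) (use bpos main in blast)
qed

end
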